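(* Let $(\mathcal S,\mathcal A,H,\mathbb P,\mu)$ be a finite episodic MDP, $\pi^+$ a deterministic target policy and $\epsilon>0$. Define manipulated mean rewards $\tilde\mu_h(s,a)=\mu(s,a)$ if $a=\pi^+_h(s)$, and $\tilde\mu_h(s,a)=Q^{\pi^+}_h(s,\pi^+_h(s))-\mathbb E_{s'\sim\mathbb P(\cdot\mid s,a)}[V^{\pi^+}_{h+1}(s')]-\epsilon$ otherwise, and let $\tilde Q^\pi_h,\tilde V^\pi_h$ be Q-values and values of deterministic policies in the MDP with transitions $\mathbb P$ and step-$h$ mean rewards $\tilde\mu_h$ (with $\tilde V_{H+1}\equiv 0$). Then for every $h\le H$, $s\in\mathcal S$, $a\ne\pi^+_h(s)$ and every deterministic policy $\pi$, $$\tilde Q^{\pi}_h(s,a)\le\tilde Q^{\pi^+}_h(s,\pi^+_h(s))-\epsilon,$$ and $\tilde V^\pi_h(s)\le\tilde V^{\pi^+}_h(s)$ for all $h,s,\pi$, with strict inequality whenever $\pi_h(s)\ne\pi^+_h(s)$.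
   Context: $V^\pi_h(s)=\mathbb E[\sum_{h'=h}^H\mu(s_{h'},\pi_{h'}(s_{h'}))\mid s_h=s]$ and $Q^\pi_h(s,a)=\mu(s,a)+\mathbb E_{s'\sim\mathbb P(\cdot|s,a)}[V^\pi_{h+1}(s')]$ are the true values, with $V^\pi_{H+1}\equiv0$; $\tilde Q^\pi_h(s,a)=\tilde\mu_h(s,a)+\mathbb E_{s'\sim\mathbb P(\cdot|s,a)}[\tilde V^\pi_{h+1}(s')]$, $\tilde V^\pi_h(s)=\tilde Q^\pi_h(s,\pi_h(s))$. *)

theory Defs
  imports "HOL-Probability.Probability"
begin

fun Vrem :: "('s \<Rightarrow> 'a \<Rightarrow> 's pmf) \<Rightarrow> (nat \<Rightarrow> 's \<Rightarrow> 'a \<Rightarrow> real)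
              \<Rightarrow> (nat \<Rightarrow> 's \<Rightarrow> 'a) \<Rightarrow> nat \<Rightarrow> nat \<Rightarrow> 's \<Rightarrow> real" where
  "Vrem P r pol 0 h s = 0"
| "Vrem P r pol (Suc k) h s =
     r h s (pol h s) + measure_pmf.expectation (P s (pol h s)) (\<lambda>s'. Vrem P r pol k (Suc h) s')"

definition Vval :: "nat \<Rightarrow> ('s \<Rightarrow> 'a \<Rightarrow> 's pmf) \<Rightarrow> (nat \<Rightarrow> 's \<Rightarrow> 'a \<Rightarrow> real)
              \<Rightarrow> (nat \<Rightarrow> 's \<Rightarrow> 'a) \<Rightarrow> nat \<Rightarrow> 's \<Rightarrow> real" where
  "Vval H P r pol h s = Vrem P r pol (H + 1 - h) h s"

definition Qval :: "nat \<Rightarrow> ('s \<Rightarrow> 'a \<Rightarrow> 's pmf) \<Rightarrow> (nat \<Rightarrow> 's \<Rightarrow> 'a \<Rightarrow> real)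
              \<Rightarrow> (nat \<Rightarrow> 's \<Rightarrow> 'a) \<Rightarrow> nat \<Rightarrow> 's \<Rightarrow> 'a \<Rightarrow> real" where
  "Qval H P r pol h s a = r h s a + measure_pmf.expectation (P s a) (\<lambda>s'. Vval H P r pol (Suc h) s')"

definition mu_tilde :: "nat \<Rightarrow> ('s \<Rightarrow> 'a \<Rightarrow> 's pmf) \<Rightarrow> ('s \<Rightarrow> 'a \<Rightarrow> real)
              \<Rightarrow> (nat \<Rightarrow> 's \<Rightarrow> 'a) \<Rightarrow> real \<Rightarrow> nat \<Rightarrow> 's \<Rightarrow> 'a \<Rightarrow> real" where
  "mu_tilde H P mu pip eps h s a =
     (if a = pip h s then mu s a
      else Qval H P (\<lambda>_. mu) pip h s (pip h s)
           - measure_pmf.expectation (P s a) (\<lambda>s'. Vval H P (\<lambda>_. mu) pip (Suc h) s')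
           - eps)"

end

theory Submission
  imports Defs
begin

lemma Vrem_agree:
  assumes "\<And>h s. r h s (pip h s) = r' h s (pip h s)"
  shows "Vrem P r pip k h s = Vrem P r' pip k h s"
proof -
  have "Vrem P r pip k h = Vrem P r' pip k h"
  proof (induction k arbitrary: h)
    case 0 show ?case by (rule ext) simp
  next
    case (Suc k) show ?case by (rule ext) (simp add: Suc.IH assms)
  qed
  then show ?thesis by simp
qed

lemma E_mono:
  fixes f g :: "'s::finite \<Rightarrow> real"
  assumes "\<And>x. f x \<le> g x"
  shows "measure_pmf.expectation p f \<le> measure_pmf.expectation p g"
  by (rule integral_mono) (auto simp: integrable_measure_pmf_finite assms)

lemma E_diff:
  fixes f g :: "'s::finite \<Rightarrow> real"
  shows "measure_pmf.expectation p (\<lambda>x. f x - g x) = measure_pmf.expectation p f - measure_pmf.expectation p g"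
  by (rule Bochner_Integration.integral_diff) (auto simp: integrable_measure_pmf_finite)

lemma E_nonpos:
  fixes f :: "'s::finite \<Rightarrow> real"
  assumes "\<And>x. f x \<le> g x"
  shows "measure_pmf.expectation p f - measure_pmf.expectation p g \<le> 0"
  using E_mono[OF assms, of p] by simp

lemma pip_eq:
  fixes P :: "'s::finite \<Rightarrow> 'a::finite \<Rightarrow> 's pmf"
  shows "Vrem P (mu_tilde H P mu pip eps) pip k h s = Vrem P (\<lambda>_. mu) pip k h s"
  by (rule Vrem_agree) (simp add: mu_tilde_def)

lemma main_ind:
  fixes P :: "'s::finite \<Rightarrow> 'a::finite \<Rightarrow> 's pmf"
  assumes eps: "eps > 0"
  shows "h + k = H + 1 \<Longrightarrow>
    Vrem P (mu_tilde H P mu pip eps) pol k h s \<le> Vrem P (mu_tilde H P mu pip eps) pip k h s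
    \<and> (k > 0 \<longrightarrow> pol h s \<noteq> pip h s \<longrightarrow>
       Vrem P (mu_tilde H P mu pip eps) pol k h s \<le> Vrem P (mu_tilde H P mu pip eps) pip k h s - eps)"
proof (induction k arbitrary: h s)
  case 0
  then show ?case by simp
next
  case (Suc j)
  define mt where "mt = mu_tilde H P mu pip eps"
  have IH: "\<And>s. Vrem P mt pol j (Suc h) s \<le> Vrem P mt pip j (Suc h) s"
    using Suc.IH[of "Suc h"] Suc.prems unfolding mt_def by simp
  have VV: "\<And>s. Vval H P (\<lambda>_. mu) pip (Suc h) s = Vrem P mt pip j (Suc h) s"
    unfolding Vval_def mt_def using Suc.prems pip_eq
    by (metis add_diff_cancel_left' add_Suc_shift add_Suc_right plus_1_eq_Suc)
  have VVf: "Vval H P (\<lambda>_. mu) pip (Suc h) = Vrem P mt pip j (Suc h)"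
    using VV by (rule ext)
  have pipval: "Vrem P mt pip (Suc j) h s = mu s (pip h s)
      + measure_pmf.expectation (P s (pip h s)) (\<lambda>s'. Vrem P mt pip j (Suc h) s')"
    by (simp add: mt_def mu_tilde_def)
  show ?case
  proof (cases "pol h s = pip h s")
    case True
    have "Vrem P mt pol (Suc j) h s \<le> Vrem P mt pip (Suc j) h s"
      using True by (simp add: E_mono[OF IH])
    then show ?thesis using True unfolding mt_def by simp
  next
    case False
    have "Vrem P mt pol (Suc j) h s = mt h s (pol h s)
       + measure_pmf.expectation (P s (pol h s)) (\<lambda>s'. Vrem P mt pol j (Suc h) s')" by simp
    also have "mt h s (pol h s) = Vrem P mt pip (Suc j) h s
        - measure_pmf.expectation (P s (pol h s)) (\<lambda>s'. Vrem P mt pip j (Suc h) s') - eps"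
      using False by (simp add: mt_def[symmetric] mu_tilde_def[of H P mu pip eps, folded mt_def]
          Qval_def VVf pipval)
    finally have "Vrem P mt pol (Suc j) h s = Vrem P mt pip (Suc j) h s - eps
       + (measure_pmf.expectation (P s (pol h s)) (\<lambda>s'. Vrem P mt pol j (Suc h) s')
          - measure_pmf.expectation (P s (pol h s)) (\<lambda>s'. Vrem P mt pip j (Suc h) s'))" by simp
    moreover have "measure_pmf.expectation (P s (pol h s)) (\<lambda>s'. Vrem P mt pol j (Suc h) s')
          - measure_pmf.expectation (P s (pol h s)) (\<lambda>s'. Vrem P mt pip j (Suc h) s') \<le> 0"
      by (rule E_nonpos[OF IH])
    ultimately have "Vrem P mt pol (Suc j) h s \<le> Vrem P mt pip (Suc j) h s - eps" by linarith
    then show ?thesis using eps unfolding mt_def by simp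
  qed
qed

theorem mainTheorem6:
  fixes P :: "'s::finite \<Rightarrow> 'a::finite \<Rightarrow> 's pmf"
    and mu :: "'s \<Rightarrow> 'a \<Rightarrow> real"
    and pip :: "nat \<Rightarrow> 's \<Rightarrow> 'a"
    and H :: nat and eps :: real
  assumes "eps > 0"
  shows "(\<forall>h\<in>{1..H}. \<forall>s a. \<forall>pol :: nat \<Rightarrow> 's \<Rightarrow> 'a. a \<noteq> pip h s \<longrightarrow>
            Qval H P (mu_tilde H P mu pip eps) pol h s a
              \<le> Qval H P (mu_tilde H P mu pip eps) pip h s (pip h s) - eps)
       \<and> (\<forall>h\<in>{1..H}. \<forall>s. \<forall>pol :: nat \<Rightarrow> 's \<Rightarrow> 'a.
            Vval H P (mu_tilde H P mu pip eps) pol h s \<le> Vval H P (mu_tilde H P mu pip eps) pip h s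
            \<and> (pol h s \<noteq> pip h s \<longrightarrow>
                Vval H P (mu_tilde H P mu pip eps) pol h s < Vval H P (mu_tilde H P mu pip eps) pip h s))"
proof (intro conjI ballI allI impI)
  define mt where "mt = mu_tilde H P mu pip eps"
  fix h s a and pol :: "nat \<Rightarrow> 's \<Rightarrow> 'a"
  assume h: "h \<in> {1..H}" and a: "a \<noteq> pip h s"
  have M: "\<And>s. Vval H P mt pol (Suc h) s \<le> Vval H P mt pip (Suc h) s"
    unfolding Vval_def mt_def using main_ind[OF assms, where h="Suc h" and k="H - h" and H=H and P=P and mu=mu and pip=pip and pol=pol] h by auto
  have VV: "\<And>s. Vval H P (\<lambda>_. mu) pip (Suc h) s = Vval H P mt pip (Suc h) s"
    unfolding Vval_def mt_def using pip_eq by metis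
  have VVf: "Vval H P (\<lambda>_. mu) pip (Suc h) = Vval H P mt pip (Suc h)"
    using VV by (rule ext)
  have "Qval H P mt pol h s a = Qval H P mt pip h s (pip h s) - eps
     + (measure_pmf.expectation (P s a) (\<lambda>s'. Vval H P mt pol (Suc h) s')
        - measure_pmf.expectation (P s a) (\<lambda>s'. Vval H P mt pip (Suc h) s'))"
    using a by (simp add: Qval_def mt_def mu_tilde_def VVf[unfolded mt_def])
  moreover have "measure_pmf.expectation (P s a) (\<lambda>s'. Vval H P mt pol (Suc h) s')
        - measure_pmf.expectation (P s a) (\<lambda>s'. Vval H P mt pip (Suc h) s') \<le> 0"
    by (rule E_nonpos[OF M])
  ultimately show "Qval H P (mu_tilde H P mu pip eps) pol h s a
              \<le> Qval H P (mu_tilde H P mu pip eps) pip h s (pip h s) - eps"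
    unfolding mt_def by linarith
next
  fix h s and pol :: "nat \<Rightarrow> 's \<Rightarrow> 'a"
  assume h: "h \<in> {1..H}"
  then show "Vval H P (mu_tilde H P mu pip eps) pol h s \<le> Vval H P (mu_tilde H P mu pip eps) pip h s"
    unfolding Vval_def using main_ind[OF assms, where h=h and k="H + 1 - h" and H=H and P=P and mu=mu and pip=pip and pol=pol and s=s] by auto
next
  fix h s and pol :: "nat \<Rightarrow> 's \<Rightarrow> 'a"
  assume h: "h \<in> {1..H}" and ne: "pol h s \<noteq> pip h s"
  then show "Vval H P (mu_tilde H P mu pip eps) pol h s < Vval H P (mu_tilde H P mu pip eps) pip h s"
    unfolding Vval_def using main_ind[OF assms, where h=h and k="H + 1 - h" and H=H and P=P and mu=mu and pip=pip and pol=pol and s=s] assms by force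
qed

end
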